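(* For all $x\in\mathbb{C}$ with $x\neq 0$ and all integers $n\ge0$, \[ \sum_{k=0}^n 2^k\frac{L_k(x)}{x^k}=2^{n+1}\frac{F_{n+1}(x)}{x^n}, \] and, if moreover $x\neq\pm 2i$, \[ \sum_{k=0}^n 2^k\frac{F_k(x)}{x^k}=\frac{x}{x^2+4}\Big(2^{n+1}\frac{L_{n+1}(x)}{x^{n+1}}-2\Big). \]
   Context: The Fibonacci polynomials $F_n(x)$ and Lucas polynomials $L_n(x)$ are defined by $F_0(x)=0$, $F_1(x)=1$, $L_0(x)=2$, $L_1(x)=x$ and $W_n(x)=xW_{n-1}(x)+W_{n-2}(x)$ for $n\ge2$ (for $W=F$ and $W=L$). Here $i=\sqrt{-1}$. *)

theory Defs
  imports Complex_Main
begin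

fun fibpoly :: "nat \<Rightarrow> complex \<Rightarrow> complex" where
  "fibpoly 0 x = 0"
| "fibpoly (Suc 0) x = 1"
| "fibpoly (Suc (Suc n)) x = x * fibpoly (Suc n) x + fibpoly n x"

fun lucaspoly :: "nat \<Rightarrow> complex \<Rightarrow> complex" where
  "lucaspoly 0 x = 2"
| "lucaspoly (Suc 0) x = x"
| "lucaspoly (Suc (Suc n)) x = x * lucaspoly (Suc n) x + lucaspoly n x"

end

theory Submission
  imports Defs
begin

lemma luc_fib: "lucaspoly n x = 2 * fibpoly (Suc n) x - x * fibpoly n x"
  by (induction n x rule: fibpoly.induct) (auto simp: algebra_simps)

lemma part1:
  fixes x :: complex assumes "x \<noteq> 0"
  shows "(\<Sum>k=0..n. 2^k * lucaspoly k x / x^k) = 2^(n+1) * fibpoly (n+1) x / x^n"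
proof (induction n)
  case 0 then show ?case by simp
next
  case (Suc n)
  have L: "lucaspoly (Suc n) x = 2 * fibpoly (Suc (Suc n)) x - x * fibpoly (Suc n) x"
    by (rule luc_fib)
  have "(\<Sum>k=0..Suc n. 2^k * lucaspoly k x / x^k) = 2^(n+1) * fibpoly (n+1) x / x^n
     + 2^(Suc n) * lucaspoly (Suc n) x / x^(Suc n)" using Suc by simp
  also have "\<dots> = 2^(Suc n+1) * fibpoly (Suc n+1) x / x^Suc n"
    unfolding L using assms by (simp add: field_simps)
  finally show ?case .
qed

lemma part2:
  fixes x :: complex assumes "x \<noteq> 0" "x^2 + 4 \<noteq> 0"
  shows "(\<Sum>k=0..n. 2^k * fibpoly k x / x^k)
           = x / (x^2 + 4) * (2^(n+1) * lucaspoly (n+1) x / x^(n+1) - 2)"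
proof (induction n)
  case 0 then show ?case using assms by (simp add: field_simps)
next
  case (Suc n)
  have K: "2 * lucaspoly (Suc (Suc n)) x = (x^2+4) * fibpoly (Suc n) x + x * lucaspoly (Suc n) x"
  proof -
    have a: "lucaspoly (Suc (Suc n)) x = x * lucaspoly (Suc n) x + lucaspoly n x" by simp
    have b: "lucaspoly (Suc n) x = 2 * fibpoly (Suc (Suc n)) x - x * fibpoly (Suc n) x" by (rule luc_fib)
    have c: "lucaspoly n x = 2 * fibpoly (Suc n) x - x * fibpoly n x" by (rule luc_fib)
    have d: "fibpoly (Suc (Suc n)) x = x * fibpoly (Suc n) x + fibpoly n x" by simp
    show ?thesis unfolding a b c d by (simp add: algebra_simps power2_eq_square)
  qed
  have "(\<Sum>k=0..Suc n. 2^k * fibpoly k x / x^k) = x / (x^2 + 4) * (2^(n+1) * lucaspoly (n+1) x / x^(n+1) - 2)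
     + 2^(Suc n) * fibpoly (Suc n) x / x^(Suc n)" using Suc by simp
  also have "\<dots> = x / (x^2 + 4) * (2^(Suc n+1) * lucaspoly (Suc n+1) x / x^(Suc n+1) - 2)"
  proof -
    have e: "lucaspoly (Suc n + 1) x = ((x^2+4) * fibpoly (Suc n) x + x * lucaspoly (Suc n) x) / 2"
      using K by (simp add: mult.commute)
    obtain c where c: "c = x^2+4" "c \<noteq> 0" using assms by blast
    show ?thesis unfolding e c(1)[symmetric] using assms c(2) by (simp add: field_simps)
  qed
  finally show ?case .
qed

theorem corollary5:
  fixes x :: complex and n :: nat
  assumes "x \<noteq> 0"
  shows "(\<Sum>k=0..n. 2^k * lucaspoly k x / x^k) = 2^(n+1) * fibpoly (n+1) x / x^n
    \<and> (x \<noteq> 2 * \<i> \<and> x \<noteq> - 2 * \<i> \<longrightarrow>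
         (\<Sum>k=0..n. 2^k * fibpoly k x / x^k)
           = x / (x^2 + 4) * (2^(n+1) * lucaspoly (n+1) x / x^(n+1) - 2))"
proof (intro conjI impI)
  show "(\<Sum>k=0..n. 2^k * lucaspoly k x / x^k) = 2^(n+1) * fibpoly (n+1) x / x^n"
    using part1[OF assms] .
  assume h: "x \<noteq> 2 * \<i> \<and> x \<noteq> - 2 * \<i>"
  have "x^2 + 4 \<noteq> 0"
  proof
    assume "x^2 + 4 = 0"
    then have "(x - 2*\<i>) * (x + 2*\<i>) = 0" by (simp add: algebra_simps power2_eq_square)
    then show False using h by (auto simp: add_eq_0_iff)
  qed
  then show "(\<Sum>k=0..n. 2^k * fibpoly k x / x^k)
           = x / (x^2 + 4) * (2^(n+1) * lucaspoly (n+1) x / x^(n+1) - 2)"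
    using part2[OF assms] by blast
qed

end
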